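(* Let $X$ and $Y$ be Banach spaces such that $X$ coarsely Lipschitz embeds into $Y$. Then $\mathcal F(X)$ is crudely finitely representable in $\mathcal F(Y)$.
   Context: $X$ coarsely Lipschitz embeds into $Y$ if there are a map $f\colon X\to Y$ and constants $A,B>0$, $C\geq 0$ such that $A\|x-y\|-C\leq\|f(x)-f(y)\|\leq B\|x-y\|+C$ for all $x,y\in X$. A Banach space $E_0$ is crudely finitely representable in a Banach space $W$ if there is $\lambda\geq1$ such that for every finite-dimensional subspace $E$ of $E_0$ and every $\varepsilon>0$ there is a finite-dimensional subspace $F$ of $W$ with Banach–Mazur distance $d(E,F)\leq\lambda+\varepsilon$. For a Banach space $Z$ (pointed at $0$), $\mathrm{Lip}_0(Z)$ is the Banach space of real Lipschitz functions vanishing at $0$ normed by the Lipschitz constant, and $\mathcal F(Z)=\overline{\mathrm{span}}\{\delta(x):x\in Z\}\subset\mathrm{Lip}_0(Z)^*$, $\delta(x)$ being evaluation at $x$. *)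

theory Defs
  imports "HOL-Analysis.Analysis"
begin

definition coarse_lipschitz_embeds :: "'a::real_normed_vector itself \<Rightarrow> 'b::real_normed_vector itself \<Rightarrow> bool" where
  "coarse_lipschitz_embeds _ _ \<longleftrightarrow>
     (\<exists>(f::'a \<Rightarrow> 'b) A B C. A > 0 \<and> B > 0 \<and> C \<ge> 0 \<and>
        (\<forall>x y. A * norm (x - y) - C \<le> norm (f x - f y) \<and> norm (f x - f y) \<le> B * norm (x - y) + C))"

definition Lip0 :: "('a::real_normed_vector \<Rightarrow> real) set" where
  "Lip0 = {g. (\<exists>L. lipschitz_on L UNIV g) \<and> g 0 = 0}"

definition Lip0_ball :: "('a::real_normed_vector \<Rightarrow> real) set" where
  "Lip0_ball = {g. lipschitz_on 1 UNIV g \<and> g 0 = 0}"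

text \<open>Elements of the dual Lip_0(Z)^* are represented as functionals on 'a \<Rightarrow> real that are
  linear on Lip_0(Z) and vanish outside Lip_0(Z) (so that the representation is unique).\<close>
definition dnorm :: "(('a::real_normed_vector \<Rightarrow> real) \<Rightarrow> real) \<Rightarrow> real" where
  "dnorm \<phi> = Sup {\<bar>\<phi> g\<bar> | g. g \<in> (Lip0_ball :: ('a \<Rightarrow> real) set)}"

definition dual_Lip0 :: "(('a::real_normed_vector \<Rightarrow> real) \<Rightarrow> real) set" where
  "dual_Lip0 = {\<phi>. (\<forall>g. g \<notin> (Lip0 :: ('a \<Rightarrow> real) set) \<longrightarrow> \<phi> g = 0) \<and>
      (\<forall>g\<in>Lip0. \<forall>h\<in>Lip0. \<forall>c a::real. \<phi> (\<lambda>x. c * g x + a * h x) = c * \<phi> g + a * \<phi> h) \<and>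
      bdd_above {\<bar>\<phi> g\<bar> | g. g \<in> (Lip0_ball :: ('a \<Rightarrow> real) set)}}"

definition dirac :: "'a::real_normed_vector \<Rightarrow> (('a \<Rightarrow> real) \<Rightarrow> real)" where
  "dirac x = (\<lambda>g. if g \<in> Lip0 then g x else 0)"

definition fadd :: "('c \<Rightarrow> real) \<Rightarrow> ('c \<Rightarrow> real) \<Rightarrow> ('c \<Rightarrow> real)" where
  "fadd \<phi> \<psi> = (\<lambda>g. \<phi> g + \<psi> g)"
definition fscale :: "real \<Rightarrow> ('c \<Rightarrow> real) \<Rightarrow> ('c \<Rightarrow> real)" where
  "fscale c \<phi> = (\<lambda>g. c * \<phi> g)"

definition fspan :: "('c \<Rightarrow> real) set \<Rightarrow> ('c \<Rightarrow> real) set" where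
  "fspan S = {(\<lambda>g. \<Sum>i<n. a i * v i g) | (n::nat) a v. \<forall>i<n. v i \<in> S}"

text \<open>The Lipschitz-free space F(Z): closure in Lip_0(Z)^* of span of the Diracs.\<close>
definition free_space :: "'a::real_normed_vector itself \<Rightarrow> (('a \<Rightarrow> real) \<Rightarrow> real) set" where
  "free_space _ = {\<phi> \<in> dual_Lip0. \<forall>e>0. \<exists>\<psi>\<in>fspan (range (dirac :: 'a \<Rightarrow> _)).
                       dnorm (\<lambda>g. \<phi> g - \<psi> g) < e}"

definition fd_subspace_of :: "(('a::real_normed_vector \<Rightarrow> real) \<Rightarrow> real) set \<Rightarrow> (('a \<Rightarrow> real) \<Rightarrow> real) set \<Rightarrow> bool" where
  "fd_subspace_of E W \<longleftrightarrow> E \<subseteq> W \<and> (\<exists>B. finite B \<and> E = fspan B)"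

definition linear_on_set :: "('c \<Rightarrow> real) set \<Rightarrow> (('c \<Rightarrow> real) \<Rightarrow> ('d \<Rightarrow> real)) \<Rightarrow> bool" where
  "linear_on_set E T \<longleftrightarrow> (\<forall>u\<in>E. \<forall>v\<in>E. \<forall>c a. T (fadd (fscale c u) (fscale a v)) = fadd (fscale c (T u)) (fscale a (T v)))"

definition op_norm_on :: "(('a::real_normed_vector \<Rightarrow> real) \<Rightarrow> real) set \<Rightarrow>
   ((('a \<Rightarrow> real) \<Rightarrow> real) \<Rightarrow> (('b::real_normed_vector \<Rightarrow> real) \<Rightarrow> real)) \<Rightarrow> real" where
  "op_norm_on E T = Sup {dnorm (T e) | e. e \<in> E \<and> dnorm e \<le> 1}"

text \<open>Banach--Mazur distance: infimum of norm(T) times norm(T inverse) over linear isomorphisms E \<rightarrow> F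
  (= \<infinity> if there is none).\<close>
definition bm_dist :: "(('a::real_normed_vector \<Rightarrow> real) \<Rightarrow> real) set \<Rightarrow> (('b::real_normed_vector \<Rightarrow> real) \<Rightarrow> real) set \<Rightarrow> ereal" where
  "bm_dist E F = Inf {ereal (op_norm_on E T * op_norm_on F S) | T S.
      linear_on_set E T \<and> linear_on_set F S \<and> T ` E \<subseteq> F \<and> S ` F \<subseteq> E \<and>
      (\<forall>e\<in>E. S (T e) = e) \<and> (\<forall>f\<in>F. T (S f) = f)}"

definition crudely_fin_rep :: "(('a::real_normed_vector \<Rightarrow> real) \<Rightarrow> real) set \<Rightarrow> (('b::real_normed_vector \<Rightarrow> real) \<Rightarrow> real) set \<Rightarrow> bool" where
  "crudely_fin_rep E0 W \<longleftrightarrow> (\<exists>lam\<ge>1. \<forall>E. fd_subspace_of E E0 \<longrightarrow>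
      (\<forall>\<epsilon>>0. \<exists>F. fd_subspace_of F W \<and> bm_dist E F \<le> ereal (lam + \<epsilon>)))"

end

theory Submission
  imports Defs
begin

lemma ball_in_Lip0: "g \<in> Lip0_ball \<Longrightarrow> g \<in> Lip0"
  by (auto simp: Lip0_ball_def Lip0_def)

lemma zero_in_ball: "(\<lambda>x. 0) \<in> Lip0_ball"
  by (auto simp: Lip0_ball_def lipschitz_on_def)

lemma Lip0_comb:
  assumes "g \<in> Lip0" "h \<in> Lip0"
  shows "(\<lambda>x. c * g x + a * h x) \<in> Lip0"
proof -
  obtain L1 L2 where l1: "lipschitz_on L1 UNIV g" and l2: "lipschitz_on L2 UNIV h"
    and z: "g 0 = 0" "h 0 = 0" using assms by (auto simp: Lip0_def)
  have "lipschitz_on (\<bar>c\<bar> * L1 + \<bar>a\<bar> * L2) UNIV (\<lambda>x. c * g x + a * h x)"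
  proof (rule lipschitz_onI)
    fix x y :: 'a
    have d1: "\<bar>g x - g y\<bar> \<le> L1 * dist x y" using lipschitz_onD[OF l1] by (simp add: dist_real_def)
    have d2: "\<bar>h x - h y\<bar> \<le> L2 * dist x y" using lipschitz_onD[OF l2] by (simp add: dist_real_def)
    have "\<bar>(c * g x + a * h x) - (c * g y + a * h y)\<bar> = \<bar>c * (g x - g y) + a * (h x - h y)\<bar>"
      by (simp add: algebra_simps)
    also have "\<dots> \<le> \<bar>c\<bar> * \<bar>g x - g y\<bar> + \<bar>a\<bar> * \<bar>h x - h y\<bar>"
      by (metis abs_mult abs_triangle_ineq)
    also have "\<dots> \<le> \<bar>c\<bar> * (L1 * dist x y) + \<bar>a\<bar> * (L2 * dist x y)"
      by (intro add_mono mult_left_mono d1 d2) auto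
    finally show "dist (c * g x + a * h x) (c * g y + a * h y) \<le> (\<bar>c\<bar> * L1 + \<bar>a\<bar> * L2) * dist x y"
      by (simp add: dist_real_def algebra_simps)
  next
    show "0 \<le> \<bar>c\<bar> * L1 + \<bar>a\<bar> * L2" using lipschitz_on_nonneg[OF l1] lipschitz_on_nonneg[OF l2] by simp
  qed
  then show ?thesis using z by (auto simp: Lip0_def)
qed

lemma zero_in_Lip0: "(\<lambda>x. 0) \<in> Lip0"
  using ball_in_Lip0 zero_in_ball by blast

lemma dual_lin: fixes \<phi> :: "('a::real_normed_vector \<Rightarrow> real) \<Rightarrow> real" shows "\<phi> \<in> dual_Lip0 \<Longrightarrow> g \<in> Lip0 \<Longrightarrow> h \<in> Lip0 \<Longrightarrow>
   \<phi> (\<lambda>x. c * g x + a * h x) = c * \<phi> g + a * \<phi> h"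
  unfolding dual_Lip0_def by blast

lemma dual_zero: fixes \<phi> :: "('a::real_normed_vector \<Rightarrow> real) \<Rightarrow> real" shows "\<phi> \<in> dual_Lip0 \<Longrightarrow> \<phi> (\<lambda>x. 0) = 0"
proof -
  assume "\<phi> \<in> dual_Lip0"
  from dual_lin[OF this zero_in_Lip0 zero_in_Lip0, of 0 0] show ?thesis by simp
qed

lemma dual_out: fixes \<phi> :: "('a::real_normed_vector \<Rightarrow> real) \<Rightarrow> real" shows "\<phi> \<in> dual_Lip0 \<Longrightarrow> g \<notin> Lip0 \<Longrightarrow> \<phi> g = 0"
  unfolding dual_Lip0_def by blast

lemma dual_bdd: fixes \<phi> :: "('a::real_normed_vector \<Rightarrow> real) \<Rightarrow> real" shows "\<phi> \<in> dual_Lip0 \<Longrightarrow> bdd_above {\<bar>\<phi> g\<bar> | g. g \<in> Lip0_ball}"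
  unfolding dual_Lip0_def by auto

lemma dual_abs_le: fixes \<phi> :: "('a::real_normed_vector \<Rightarrow> real) \<Rightarrow> real" shows "\<phi> \<in> dual_Lip0 \<Longrightarrow> g \<in> Lip0_ball \<Longrightarrow> \<bar>\<phi> g\<bar> \<le> dnorm \<phi>"
  unfolding dnorm_def by (rule cSup_upper) (auto dest: dual_bdd)

lemma dnorm_le: fixes \<phi> :: "('a::real_normed_vector \<Rightarrow> real) \<Rightarrow> real" shows "(\<And>g. g \<in> Lip0_ball \<Longrightarrow> \<bar>\<phi> g\<bar> \<le> K) \<Longrightarrow> dnorm \<phi> \<le> K"
  unfolding dnorm_def by (rule cSup_least) (use zero_in_ball in auto)

lemma dnorm_nonneg: fixes \<phi> :: "('a::real_normed_vector \<Rightarrow> real) \<Rightarrow> real" shows "\<phi> \<in> dual_Lip0 \<Longrightarrow> 0 \<le> dnorm \<phi>"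
  using dual_abs_le[OF _ zero_in_ball, of \<phi>] by linarith

lemma dual_bound:
  fixes \<phi> :: "('a::real_normed_vector \<Rightarrow> real) \<Rightarrow> real"
  assumes "\<phi> \<in> dual_Lip0" "lipschitz_on L UNIV h" "h 0 = 0"
  shows "\<bar>\<phi> h\<bar> \<le> L * dnorm \<phi>"
proof (cases "L = 0")
  case True
  have "h = (\<lambda>x. 0)"
  proof
    fix x show "h x = 0" using lipschitz_onD[OF assms(2), of x 0] True assms(3) by simp
  qed
  then show ?thesis using dual_zero[OF assms(1)] True by simp
next
  case False
  then have Lp: "L > 0" using lipschitz_on_nonneg[OF assms(2)] by simp
  have hL: "h \<in> Lip0" using assms by (auto simp: Lip0_def)
  have "lipschitz_on 1 UNIV (\<lambda>x. (1/L) * h x + 0 * h x)"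
  proof (rule lipschitz_onI)
    fix x y :: 'a
    have "dist (h x) (h y) \<le> L * dist x y" using lipschitz_onD[OF assms(2)] by simp
    then have "\<bar>h x - h y\<bar> / L \<le> dist x y" using Lp by (simp add: dist_real_def field_simps)
    then show "dist ((1/L) * h x + 0 * h x) ((1/L) * h y + 0 * h y) \<le> 1 * dist x y"
      using Lp by (simp add: dist_real_def abs_mult right_diff_distrib[symmetric] field_simps)
  qed simp
  then have b: "(\<lambda>x. (1/L) * h x + 0 * h x) \<in> Lip0_ball" using assms(3) by (simp add: Lip0_ball_def)
  have "\<phi> (\<lambda>x. (1/L) * h x + 0 * h x) = (1/L) * \<phi> h"
    using dual_lin[OF assms(1) hL hL, of "1/L" 0] by simp
  with dual_abs_le[OF assms(1) b] have "\<bar>\<phi> h\<bar> / L \<le> dnorm \<phi>" using Lp by (simp add: abs_mult)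
  then show ?thesis using Lp by (simp add: field_simps)
qed

lemma dual_sum:
  fixes v :: "'i \<Rightarrow> ('a::real_normed_vector \<Rightarrow> real) \<Rightarrow> real"
  assumes "\<And>i. i \<in> I \<Longrightarrow> v i \<in> dual_Lip0"
  shows "(\<lambda>g. \<Sum>i\<in>I. c i * v i g) \<in> dual_Lip0"
    and "dnorm (\<lambda>g. \<Sum>i\<in>I. c i * v i g) \<le> (\<Sum>i\<in>I. \<bar>c i\<bar> * dnorm (v i))"
proof -
  have bnd: "\<bar>\<Sum>i\<in>I. c i * v i g\<bar> \<le> (\<Sum>i\<in>I. \<bar>c i\<bar> * dnorm (v i))" if "g \<in> Lip0_ball" for g
  proof -
    have "\<bar>\<Sum>i\<in>I. c i * v i g\<bar> \<le> (\<Sum>i\<in>I. \<bar>c i * v i g\<bar>)" by (rule sum_abs)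
    also have "\<dots> \<le> (\<Sum>i\<in>I. \<bar>c i\<bar> * dnorm (v i))"
      by (intro sum_mono) (auto simp: abs_mult intro!: mult_left_mono dual_abs_le assms that)
    finally show ?thesis .
  qed
  show "dnorm (\<lambda>g. \<Sum>i\<in>I. c i * v i g) \<le> (\<Sum>i\<in>I. \<bar>c i\<bar> * dnorm (v i))"
    by (rule dnorm_le) (use bnd in simp)
  show "(\<lambda>g. \<Sum>i\<in>I. c i * v i g) \<in> dual_Lip0"
    unfolding dual_Lip0_def
  proof (intro CollectI conjI allI ballI impI)
    fix g :: "'a \<Rightarrow> real" assume "g \<notin> Lip0"
    then show "(\<Sum>i\<in>I. c i * v i g) = 0" by (auto intro!: sum.neutral simp: dual_out assms)
  next
    fix g h :: "'a \<Rightarrow> real" assume "g \<in> Lip0" "h \<in> Lip0"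
    fix c' a' :: real
    have "(\<Sum>i\<in>I. c i * v i (\<lambda>x. c' * g x + a' * h x)) = (\<Sum>i\<in>I. c' * (c i * v i g) + a' * (c i * v i h))"
      by (intro sum.cong refl) (simp only: dual_lin[OF assms \<open>g \<in> Lip0\<close> \<open>h \<in> Lip0\<close>], simp add: algebra_simps)
    also have "\<dots> = c' * (\<Sum>i\<in>I. c i * v i g) + a' * (\<Sum>i\<in>I. c i * v i h)"
      by (simp add: sum.distrib sum_distrib_left)
    finally show "(\<Sum>i\<in>I. c i * v i (\<lambda>x. c' * g x + a' * h x)) = c' * (\<Sum>i\<in>I. c i * v i g) + a' * (\<Sum>i\<in>I. c i * v i h)" .
  next
    show "bdd_above {\<bar>\<Sum>i\<in>I. c i * v i g\<bar> |g. g \<in> Lip0_ball}"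
      using bnd by (auto intro!: bdd_aboveI)
  qed
qed

lemma dirac_dual: "dirac x \<in> dual_Lip0"
  unfolding dual_Lip0_def
proof (intro CollectI conjI allI ballI impI)
  show "bdd_above {\<bar>dirac x g\<bar> |g. g \<in> Lip0_ball}"
  proof (rule bdd_aboveI)
    fix r assume "r \<in> {\<bar>dirac x g\<bar> |g. g \<in> Lip0_ball}"
    then obtain g where "r = \<bar>dirac x g\<bar>" "g \<in> Lip0_ball" by blast
    then show "r \<le> norm x" using lipschitz_onD[of 1 UNIV g x 0]
      by (auto simp: dirac_def Lip0_ball_def Lip0_def dist_real_def)
  qed
qed (auto simp: dirac_def Lip0_comb)

lemma fspan_finite:
  assumes "finite I" "\<And>i. i \<in> I \<Longrightarrow> v i \<in> S"
  shows "(\<lambda>g. \<Sum>i\<in>I. a i * v i g) \<in> fspan S"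
proof -
  obtain h where h: "bij_betw h {0..<card I} I" using ex_bij_betw_nat_finite[OF assms(1)] by blast
  have "h j \<in> I" if "j < card I" for j using bij_betwE[OF h] that by auto
  then have "\<forall>j<card I. v (h j) \<in> S" using assms(2) by blast
  moreover have "(\<lambda>g. \<Sum>i\<in>I. a i * v i g) = (\<lambda>g. \<Sum>j<card I. a (h j) * v (h j) g)"
  proof
    fix g show "(\<Sum>i\<in>I. a i * v i g) = (\<Sum>j<card I. a (h j) * v (h j) g)"
      using sum.reindex_bij_betw[OF h, of "\<lambda>i. a i * v i g"] by (simp add: atLeast0LessThan)
  qed
  ultimately show ?thesis unfolding fspan_def
    by (intro CollectI exI[of _ "card I"] exI[of _ "\<lambda>j. a (h j)"] exI[of _ "\<lambda>j. v (h j)"]) simp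
qed

lemma fspan_elem:
  assumes "e \<in> fspan S"
  shows "\<exists>(n::nat) a w. (\<forall>i<n. w i \<in> S) \<and> e = (\<lambda>g. \<Sum>i<n. a i * w i g)"
  using assms unfolding fspan_def by auto

lemma fspan_base: "b \<in> S \<Longrightarrow> b \<in> fspan S"
  using fspan_finite[of "{0::nat}" "\<lambda>_. b" S "\<lambda>_. 1"] by simp

lemma fspan_zero: "(\<lambda>g. 0) \<in> fspan S"
  using fspan_finite[of "{}::nat set" "\<lambda>_. undefined" S "\<lambda>_. 1"] by simp

lemma fspan_comb:
  assumes "u \<in> fspan S" "v \<in> fspan S"
  shows "(\<lambda>g. c * u g + a * v g) \<in> fspan S"
proof -
  obtain n1 a1 w1 where 1: "\<And>i. i < (n1::nat) \<Longrightarrow> w1 i \<in> S" "u = (\<lambda>g. \<Sum>i<n1. a1 i * w1 i g)"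
    using fspan_elem[OF assms(1)] by blast
  obtain n2 a2 w2 where 2: "\<And>i. i < (n2::nat) \<Longrightarrow> w2 i \<in> S" "v = (\<lambda>g. \<Sum>i<n2. a2 i * w2 i g)"
    using fspan_elem[OF assms(2)] by blast
  define I :: "(nat + nat) set" where "I = Inl ` {..<n1} \<union> Inr ` {..<n2}"
  define W where "W = case_sum w1 w2"
  define A where "A = case_sum (\<lambda>i. c * a1 i) (\<lambda>i. a * a2 i)"
  have "(\<lambda>g. \<Sum>i\<in>I. A i * W i g) \<in> fspan S"
    by (rule fspan_finite) (auto simp: I_def W_def 1 2)
  moreover have "(\<lambda>g. \<Sum>i\<in>I. A i * W i g) = (\<lambda>g. c * u g + a * v g)"
  proof
    fix g
    have "(\<Sum>i\<in>I. A i * W i g) = (\<Sum>i\<in>Inl ` {..<n1}. A i * W i g) + (\<Sum>i\<in>Inr ` {..<n2}. A i * W i g)"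
      unfolding I_def by (rule sum.union_disjoint) auto
    also have "\<dots> = (\<Sum>i<n1. c * a1 i * w1 i g) + (\<Sum>i<n2. a * a2 i * w2 i g)"
      by (simp add: sum.reindex A_def W_def)
    also have "\<dots> = c * u g + a * v g"
      by (simp add: 1 2 sum_distrib_left mult.assoc)
    finally show "(\<Sum>i\<in>I. A i * W i g) = c * u g + a * v g" .
  qed
  ultimately show ?thesis by simp
qed

lemma fspan_sum:
  assumes "\<And>i. i \<in> I \<Longrightarrow> u i \<in> fspan S"
  shows "(\<lambda>g. \<Sum>i\<in>I. c i * u i g) \<in> fspan S"
proof (cases "finite I")
  case True
  then show ?thesis using assms
  proof (induction I rule: finite_induct)
    case empty then show ?case using fspan_zero by simp
  next
    case (insert x F)
    have "(\<lambda>g. c x * u x g + 1 * (\<lambda>g. \<Sum>i\<in>F. c i * u i g) g) \<in> fspan S"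
      by (rule fspan_comb) (use insert in auto)
    then show ?case using insert by simp
  qed
next
  case False then show ?thesis using fspan_zero by simp
qed

lemma fspan_insert:
  assumes "e \<in> fspan (insert b B)"
  obtains e0 \<alpha> where "e0 \<in> fspan B" "e = (\<lambda>g. e0 g + \<alpha> * b g)"
proof -
  obtain n a w where w: "\<And>i. i < (n::nat) \<Longrightarrow> w i \<in> insert b B" "e = (\<lambda>g. \<Sum>i<n. a i * w i g)"
    using fspan_elem[OF assms] by blast
  define e0 where "e0 = (\<lambda>g. \<Sum>i\<in>{..<n} \<inter> - {i. w i = b}. a i * w i g)"
  have "e0 \<in> fspan B" unfolding e0_def by (rule fspan_finite) (use w in \<open>auto intro: finite_Int\<close>)
  moreover have "e = (\<lambda>g. e0 g + (\<Sum>i\<in>{..<n} \<inter> {i. w i = b}. a i) * b g)"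
  proof
    fix g
    have "(\<Sum>i<n. a i * w i g) = (\<Sum>i<n. if w i = b then a i * b g else a i * w i g)"
      by (rule sum.cong) auto
    also have "\<dots> = (\<Sum>i\<in>{..<n} \<inter> {i. w i = b}. a i * b g) + e0 g"
      unfolding e0_def by (rule sum.If_cases) simp
    finally show "e g = e0 g + (\<Sum>i\<in>{..<n} \<inter> {i. w i = b}. a i) * b g"
      using w(2) by (simp add: sum_distrib_right)
  qed
  ultimately show ?thesis using that by blast
qed

definition linfun :: "(('c \<Rightarrow> real) \<Rightarrow> real) \<Rightarrow> bool" where
  "linfun L \<longleftrightarrow> (\<forall>e1 e2 c a. L (\<lambda>g. c * e1 g + a * e2 g) = c * L e1 + a * L e2)"

definition goodfun :: "((('a::real_normed_vector \<Rightarrow> real) \<Rightarrow> real) \<Rightarrow> real) \<Rightarrow> bool" where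
  "goodfun L \<longleftrightarrow> linfun L \<and> (\<exists>K\<ge>0. \<forall>e\<in>(dual_Lip0::(('a \<Rightarrow> real) \<Rightarrow> real) set). \<bar>L e\<bar> \<le> K * dnorm e)"

lemma linfunD: "linfun L \<Longrightarrow> L (\<lambda>g. c * e1 g + a * e2 g) = c * L e1 + a * L e2"
  unfolding linfun_def by blast

lemma linfun_zero: "linfun L \<Longrightarrow> L (\<lambda>g. 0) = 0"
  using linfunD[of L 0 "\<lambda>g. 0" 0 "\<lambda>g. 0"] by simp

lemma linfun_sum:
  assumes "linfun L"
  shows "L (\<lambda>g. \<Sum>i\<in>I. c i * w i g) = (\<Sum>i\<in>I. c i * L (w i))"
proof (cases "finite I")
  case True
  then show ?thesis
  proof (induction I rule: finite_induct)
    case empty then show ?case using linfun_zero[OF assms] by simp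
  next
    case (insert x F)
    have "L (\<lambda>g. c x * w x g + 1 * (\<lambda>g. \<Sum>i\<in>F. c i * w i g) g) = c x * L (w x) + 1 * L (\<lambda>g. \<Sum>i\<in>F. c i * w i g)"
      by (rule linfunD[OF assms])
    then show ?case using insert by simp
  qed
next
  case False then show ?thesis using linfun_zero[OF assms] by simp
qed

lemma good_eval:
  assumes "g0 \<in> (Lip0 :: ('a::real_normed_vector \<Rightarrow> real) set)"
  shows "goodfun (\<lambda>e::('a \<Rightarrow> real) \<Rightarrow> real. e g0)"
proof -
  obtain K where K: "lipschitz_on K UNIV g0" "g0 0 = 0" using assms by (auto simp: Lip0_def)
  show ?thesis unfolding goodfun_def linfun_def
    using dual_bound[OF _ K] lipschitz_on_nonneg[OF K(1)] by auto
qed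

lemma good_comb:
  assumes "goodfun L1" "goodfun L2"
  shows "goodfun (\<lambda>e. c * L1 e + a * L2 e)"
proof -
  obtain K1 where K1: "K1 \<ge> 0" "\<forall>e\<in>dual_Lip0. \<bar>L1 e\<bar> \<le> K1 * dnorm e" using assms(1) goodfun_def by blast
  obtain K2 where K2: "K2 \<ge> 0" "\<forall>e\<in>dual_Lip0. \<bar>L2 e\<bar> \<le> K2 * dnorm e" using assms(2) goodfun_def by blast
  have l1: "linfun L1" and l2: "linfun L2" using assms goodfun_def by auto
  have lin: "linfun (\<lambda>e. c * L1 e + a * L2 e)"
    unfolding linfun_def by (simp add: linfunD[OF l1] linfunD[OF l2] algebra_simps)
  have "\<bar>c * L1 e + a * L2 e\<bar> \<le> (\<bar>c\<bar> * K1 + \<bar>a\<bar> * K2) * dnorm e" if "e \<in> dual_Lip0" for e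
  proof -
    have "\<bar>c * L1 e + a * L2 e\<bar> \<le> \<bar>c\<bar> * \<bar>L1 e\<bar> + \<bar>a\<bar> * \<bar>L2 e\<bar>"
      by (metis abs_mult abs_triangle_ineq)
    also have "\<dots> \<le> \<bar>c\<bar> * (K1 * dnorm e) + \<bar>a\<bar> * (K2 * dnorm e)"
      using K1 K2 that by (intro add_mono mult_left_mono) auto
    finally show ?thesis by (simp add: algebra_simps)
  qed
  then show ?thesis unfolding goodfun_def using lin K1 K2 by (intro conjI exI[of _ "\<bar>c\<bar> * K1 + \<bar>a\<bar> * K2"]) auto
qed

lemma good_zero: "goodfun (\<lambda>e. 0)"
  unfolding goodfun_def linfun_def by auto

lemma good_sum:
  assumes "\<And>i. i \<in> I \<Longrightarrow> goodfun (L i)"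
  shows "goodfun (\<lambda>e. \<Sum>i\<in>I. c i * L i e)"
proof (cases "finite I")
  case True
  then show ?thesis using assms
  proof (induction I rule: finite_induct)
    case empty then show ?case using good_zero by simp
  next
    case (insert x F)
    have "goodfun (\<lambda>e. c x * L x e + 1 * (\<lambda>e. \<Sum>i\<in>F. c i * L i e) e)"
      by (rule good_comb) (use insert in auto)
    then show ?case using insert by simp
  qed
next
  case False then show ?thesis using good_zero by simp
qed

lemma LA:
  fixes B :: "(('a::real_normed_vector \<Rightarrow> real) \<Rightarrow> real) set"
  assumes "finite B"
  shows "\<exists>(n::nat) bb L. (\<forall>i<n. bb i \<in> B \<and> goodfun (L i)) \<and>
           (\<forall>e\<in>fspan B. \<forall>g\<in>Lip0. e g = (\<Sum>i<n. L i e * bb i g))"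
  using assms
proof (induction B rule: finite_induct)
  case empty
  have "e g = 0" if e: "e \<in> fspan {}" for e :: "('a \<Rightarrow> real) \<Rightarrow> real" and g
  proof -
    obtain n :: nat and a w where "\<forall>i<n. w i \<in> ({}::(('a \<Rightarrow> real) \<Rightarrow> real) set)" "e = (\<lambda>g. \<Sum>i<n. a i * w i g)"
      using fspan_elem[OF e] by blast
    then show ?thesis by (cases n) auto
  qed
  then show ?case by (intro exI[of _ 0]) auto
next
  case (insert b B)
  then obtain n :: nat and bb L where IH: "\<forall>i<n. bb i \<in> B \<and> goodfun (L i)"
    "\<forall>e\<in>fspan B. \<forall>g\<in>Lip0. e g = (\<Sum>i<n. L i e * bb i g)" by blast
  define P where "P e g = (\<Sum>i<n. L i e * bb i g)" for e g
  have linL: "linfun (L i)" if "i<n" for i using IH goodfun_def that by blast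
  have Lcomb: "L i (\<lambda>g. e0 g + \<alpha> * b g) = L i e0 + \<alpha> * L i b" if "i < n" for e0 \<alpha> i
    using linfunD[OF linL[OF that], of 1 e0 \<alpha> b] by simp
  have Pcomb: "P (\<lambda>g. e0 g + \<alpha> * b g) g = P e0 g + \<alpha> * P b g" for e0 \<alpha> g
    unfolding P_def by (simp add: Lcomb sum.distrib sum_distrib_left algebra_simps)
  have PB: "P e g = e g" if "e \<in> fspan B" "g \<in> Lip0" for e g
    using IH(2) that unfolding P_def by simp
  show ?case
  proof (cases "\<forall>g\<in>Lip0. b g = P b g")
    case True
    have "e g = (\<Sum>i<n. L i e * bb i g)" if ein: "e \<in> fspan (insert b B)" and gin: "g \<in> Lip0" for e g
    proof -
      obtain e0 \<alpha> where e0: "e0 \<in> fspan B" "e = (\<lambda>g. e0 g + \<alpha> * b g)"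
        using fspan_insert[OF ein] by blast
      have "e g = P e0 g + \<alpha> * P b g" using e0 PB[OF e0(1) gin] True gin by simp
      also have "\<dots> = P e g" using Pcomb e0(2) by simp
      finally show ?thesis unfolding P_def .
    qed
    then show ?thesis using IH(1) by (intro exI[of _ n] exI[of _ bb] exI[of _ L]) auto
  next
    case False
    then obtain g0 where g0: "g0 \<in> Lip0" "b g0 \<noteq> P b g0" by auto
    define \<rho> where "\<rho> = b g0 - P b g0"
    have rho: "\<rho> \<noteq> 0" using g0 \<rho>_def by simp
    define \<kappa> where "\<kappa> e = (e g0 - P e g0) / \<rho>" for e
    define bb' where "bb' = bb(n := b)"
    define L' where "L' i = (if i < n then (\<lambda>e. L i e - \<kappa> e * L i b) else \<kappa>)" for i
    have "goodfun (\<lambda>e. (1/\<rho>) * e g0 + (-1/\<rho>) * (\<lambda>e. \<Sum>i\<in>{..<n}. bb i g0 * L i e) e)"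
      by (intro good_comb good_eval good_sum) (use g0 IH in auto)
    moreover have "(\<lambda>e. (1/\<rho>) * e g0 + (-1/\<rho>) * (\<lambda>e. \<Sum>i\<in>{..<n}. bb i g0 * L i e) e) = \<kappa>"
      unfolding \<kappa>_def P_def by (rule ext) (simp add: field_simps mult.commute rho)
    ultimately have gk: "goodfun \<kappa>" by simp
    have gL': "goodfun (L' i)" if "i < Suc n" for i
    proof (cases "i < n")
      case True
      have "goodfun (\<lambda>e. 1 * L i e + (- L i b) * \<kappa> e)"
        by (intro good_comb gk) (use IH True in auto)
      then show ?thesis unfolding L'_def using True by (simp add: algebra_simps)
    qed (simp add: L'_def gk)
    have rec: "e g = (\<Sum>i<Suc n. L' i e * bb' i g)" if ein: "e \<in> fspan (insert b B)" and gin: "g \<in> Lip0" for e g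
    proof -
      obtain e0 \<alpha> where e0: "e0 \<in> fspan B" "e = (\<lambda>g. e0 g + \<alpha> * b g)"
        using fspan_insert[OF ein] by blast
      have Pe: "P e h = e0 h + \<alpha> * P b h" if "h \<in> Lip0" for h
        using Pcomb[of e0 \<alpha> h] e0 PB[OF e0(1) that] by simp
      have "\<kappa> e = \<alpha>"
        unfolding \<kappa>_def using Pe[OF g0(1)] e0(2) rho unfolding \<rho>_def by (simp add: field_simps)
      have "(\<Sum>i<Suc n. L' i e * bb' i g) = (\<Sum>i<n. (L i e - \<kappa> e * L i b) * bb i g) + \<kappa> e * b g"
        by (simp add: L'_def bb'_def)
      also have "\<dots> = P e g - \<kappa> e * P b g + \<kappa> e * b g"
        unfolding P_def by (simp add: algebra_simps sum_subtractf sum_distrib_left)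
      also have "\<dots> = e g" using Pe[OF gin] \<open>\<kappa> e = \<alpha>\<close> e0(2) by simp
      finally show ?thesis by simp
    qed
    have "\<forall>i<Suc n. bb' i \<in> insert b B \<and> goodfun (L' i)"
      using IH(1) gL' by (auto simp: bb'_def)
    then show ?thesis using rec by (intro exI[of _ "Suc n"] exI[of _ bb'] exI[of _ L']) auto
  qed
qed

lemma mcshane:
  fixes p :: "'i \<Rightarrow> 'm::metric_space"
  assumes fin: "finite M" and ne: "M \<noteq> {}" and L: "L \<ge> 0"
    and lip: "\<And>m m'. m \<in> M \<Longrightarrow> m' \<in> M \<Longrightarrow> \<bar>v m - v m'\<bar> \<le> L * dist (p m) (p m')"
  shows "lipschitz_on L UNIV (\<lambda>y. Min ((\<lambda>m. v m + L * dist y (p m)) ` M))"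
    and "m \<in> M \<Longrightarrow> Min ((\<lambda>m'. v m' + L * dist (p m) (p m')) ` M) = v m"
proof -
  define F where "F y = Min ((\<lambda>m. v m + L * dist y (p m)) ` M)" for y
  have Fle: "F y \<le> v m + L * dist y (p m)" if "m \<in> M" for y m
    unfolding F_def using fin that by (intro Min_le) auto
  have Fin: "\<exists>m\<in>M. F y = v m + L * dist y (p m)" for y
  proof -
    have "F y \<in> (\<lambda>m. v m + L * dist y (p m)) ` M" unfolding F_def using fin ne by (intro Min_in) auto
    then show ?thesis by auto
  qed
  have one: "F x - F y \<le> L * dist x y" for x y
  proof -
    obtain m where m: "m \<in> M" "F y = v m + L * dist y (p m)" using Fin by blast
    have "F x \<le> v m + L * dist x (p m)" by (rule Fle[OF m(1)])
    also have "\<dots> \<le> v m + L * (dist x y + dist y (p m))"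
      using L dist_triangle[of x "p m" y] by (intro add_left_mono mult_left_mono) auto
    finally show ?thesis using m(2) by (simp add: algebra_simps)
  qed
  show "lipschitz_on L UNIV (\<lambda>y. Min ((\<lambda>m. v m + L * dist y (p m)) ` M))"
  proof (rule lipschitz_onI)
    fix x y :: 'm
    show "dist (Min ((\<lambda>m. v m + L * dist x (p m)) ` M)) (Min ((\<lambda>m. v m + L * dist y (p m)) ` M)) \<le> L * dist x y"
      using one[of x y] one[of y x] unfolding F_def by (simp add: dist_real_def dist_commute abs_le_iff)
  qed (rule L)
  assume mM: "m \<in> M"
  have "F (p m) \<le> v m" using Fle[OF mM, of "p m"] by simp
  moreover have "v m \<le> F (p m)"
  proof -
    obtain m' where m': "m' \<in> M" "F (p m) = v m' + L * dist (p m) (p m')" using Fin by blast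
    have "v m - v m' \<le> L * dist (p m) (p m')" using lip[OF mM m'(1)] by simp
    then show ?thesis using m'(2) by simp
  qed
  ultimately show "Min ((\<lambda>m'. v m' + L * dist (p m) (p m')) ` M) = v m" unfolding F_def by simp
qed

lemma dnorm_zero_imp:
  fixes \<phi> :: "('a::real_normed_vector \<Rightarrow> real) \<Rightarrow> real"
  assumes "\<phi> \<in> dual_Lip0" "dnorm \<phi> \<le> 0"
  shows "\<phi> = (\<lambda>g. 0)"
proof
  fix g :: "'a \<Rightarrow> real"
  show "\<phi> g = 0"
  proof (cases "g \<in> Lip0")
    case True
    then obtain L where "lipschitz_on L UNIV g" "g 0 = 0" by (auto simp: Lip0_def)
    from dual_bound[OF assms(1) this] have "\<bar>\<phi> g\<bar> \<le> L * dnorm \<phi>" .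
    moreover have "L * dnorm \<phi> \<le> 0"
      using assms(2) lipschitz_on_nonneg[OF \<open>lipschitz_on L UNIV g\<close>] by (simp add: mult_nonneg_nonpos)
    ultimately show ?thesis by simp
  qed (use dual_out[OF assms(1)] in auto)
qed

lemma fspan_dual:
  fixes S :: "(('a::real_normed_vector \<Rightarrow> real) \<Rightarrow> real) set"
  assumes "S \<subseteq> dual_Lip0" "e \<in> fspan S"
  shows "e \<in> dual_Lip0"
proof -
  obtain n :: nat and a w where "\<forall>i<n. w i \<in> S" "e = (\<lambda>g. \<Sum>i<n. a i * w i g)"
    using fspan_elem[OF assms(2)] by blast
  then show ?thesis using dual_sum(1)[of "{..<n}" w a] assms(1) by auto
qed

lemma dnorm_zero: "dnorm (\<lambda>g::('a::real_normed_vector \<Rightarrow> real). 0::real) = 0"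
proof -
  have "(\<lambda>g::('a \<Rightarrow> real). \<Sum>i\<in>({}::nat set). 0 * dirac 0 g) \<in> dual_Lip0"
    by (rule dual_sum(1)) auto
  then have "0 \<le> dnorm (\<lambda>g::('a \<Rightarrow> real). 0::real)" using dnorm_nonneg by simp
  moreover have "dnorm (\<lambda>g::('a \<Rightarrow> real). 0::real) \<le> 0" by (rule dnorm_le) simp
  ultimately show ?thesis by simp
qed

lemma diracspan_free:
  fixes \<psi> :: "('a::real_normed_vector \<Rightarrow> real) \<Rightarrow> real"
  assumes "\<psi> \<in> fspan (range dirac)"
  shows "\<psi> \<in> free_space TYPE('a)"
proof -
  have "\<psi> \<in> dual_Lip0" by (rule fspan_dual[OF _ assms]) (auto intro: dirac_dual)
  moreover have "dnorm (\<lambda>g. \<psi> g - \<psi> g) < e" if "e > 0" for e :: real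
    using dnorm_zero[where 'a='a] that by simp
  ultimately show ?thesis unfolding free_space_def using assms by blast
qed

lemma coarse_finite:
  fixes f :: "'a::real_normed_vector \<Rightarrow> 'b::real_normed_vector" and M :: "'a set"
  assumes A: "A > 0" and C: "C \<ge> 0"
    and co: "\<forall>x y. A * norm (x - y) - C \<le> norm (f x - f y) \<and> norm (f x - f y) \<le> B * norm (x - y) + C"
    and fin: "finite M" and s: "s > 0"
  shows "\<exists>\<phi>::'a \<Rightarrow> 'b. \<phi> 0 = 0 \<and> (\<forall>x\<in>M. \<forall>y\<in>M. (A - s) * norm (x - y) \<le> norm (\<phi> x - \<phi> y) \<and>
            norm (\<phi> x - \<phi> y) \<le> (B + s) * norm (x - y))"
proof -
  obtain \<delta> where d: "\<delta> > 0" "\<forall>x\<in>M. \<forall>y\<in>M. x \<noteq> y \<longrightarrow> \<delta> \<le> norm (x - y)"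
  proof -
    define D where "D = (\<lambda>(x, y). norm (x - y)) ` {(x, y). x \<in> M \<and> y \<in> M \<and> x \<noteq> y}"
    have finD: "finite D" unfolding D_def
      by (rule finite_imageI, rule finite_subset[of _ "M \<times> M"]) (use fin in auto)
    show ?thesis
    proof (cases "D = {}")
      case True
      then show ?thesis using that[of 1] unfolding D_def by auto
    next
      case False
      have "Min D > 0" using finD False by (subst Min_gr_iff) (auto simp: D_def)
      moreover have "\<forall>x\<in>M. \<forall>y\<in>M. x \<noteq> y \<longrightarrow> Min D \<le> norm (x - y)"
        using finD by (auto simp: D_def intro!: Min_le)
      ultimately show ?thesis using that by blast
    qed
  qed
  define t where "t = C / (s * \<delta>) + 1"
  have t: "t > 0" unfolding t_def using C s d by (simp add: add_nonneg_pos)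
  have Ct: "C / t \<le> s * \<delta>"
  proof -
    have "C \<le> s * \<delta> * t" unfolding t_def using s d C by (simp add: field_simps)
    then show ?thesis using t by (simp add: field_simps)
  qed
  define \<phi> where "\<phi> x = (1/t) *\<^sub>R (f (t *\<^sub>R x) - f 0)" for x
  have nphi: "norm (\<phi> x - \<phi> y) = norm (f (t *\<^sub>R x) - f (t *\<^sub>R y)) / t" for x y :: 'a
  proof -
    have "\<phi> x - \<phi> y = (1/t) *\<^sub>R (f (t *\<^sub>R x) - f (t *\<^sub>R y))" unfolding \<phi>_def by (simp add: algebra_simps)
    then show ?thesis using t by simp
  qed
  have "(A - s) * norm (x - y) \<le> norm (\<phi> x - \<phi> y) \<and> norm (\<phi> x - \<phi> y) \<le> (B + s) * norm (x - y)"
    if "x \<in> M" "y \<in> M" for x y :: 'a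
  proof (cases "x = y")
    case False
    have dl: "\<delta> \<le> norm (x - y)" using d that False by blast
    have nt: "norm (t *\<^sub>R x - t *\<^sub>R y) = t * norm (x - y)"
      using t by (simp add: scaleR_diff_right[symmetric])
    from co have c1: "A * (t * norm (x - y)) - C \<le> norm (f (t *\<^sub>R x) - f (t *\<^sub>R y))"
      and c2: "norm (f (t *\<^sub>R x) - f (t *\<^sub>R y)) \<le> B * (t * norm (x - y)) + C"
      using nt by metis+
    have "C / t \<le> s * norm (x - y)" using Ct dl s by (meson mult_left_mono less_imp_le order_trans)
    moreover have "A * norm (x - y) - C / t \<le> norm (\<phi> x - \<phi> y)"
    proof -
      have "A * norm (x - y) - C / t = (A * (t * norm (x - y)) - C) / t" using t by (simp add: field_simps)
      also have "\<dots> \<le> norm (f (t *\<^sub>R x) - f (t *\<^sub>R y)) / t" by (intro divide_right_mono c1) (use t in simp)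
      finally show ?thesis unfolding nphi .
    qed
    moreover have "norm (\<phi> x - \<phi> y) \<le> B * norm (x - y) + C / t"
    proof -
      have "B * norm (x - y) + C / t = (B * (t * norm (x - y)) + C) / t" using t by (simp add: field_simps)
      moreover have "norm (f (t *\<^sub>R x) - f (t *\<^sub>R y)) / t \<le> (B * (t * norm (x - y)) + C) / t" by (intro divide_right_mono c2) (use t in simp)
      ultimately show ?thesis unfolding nphi by simp
    qed
    ultimately show ?thesis by (simp add: algebra_simps)
  qed simp
  moreover have "\<phi> 0 = 0" unfolding \<phi>_def by simp
  ultimately show ?thesis by blast
qed

lemma dual_comb:
  fixes \<phi> \<psi> :: "('a::real_normed_vector \<Rightarrow> real) \<Rightarrow> real"
  assumes "\<phi> \<in> dual_Lip0" "\<psi> \<in> dual_Lip0"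
  shows "(\<lambda>g. c * \<phi> g + a * \<psi> g) \<in> dual_Lip0"
proof -
  have "(\<lambda>g. \<Sum>b\<in>{True, False}. (if b then c else a) * (if b then \<phi> else \<psi>) g) \<in> dual_Lip0"
    by (rule dual_sum(1)) (use assms in auto)
  then show ?thesis by simp
qed

lemma diracspan_rep:
  assumes "\<psi> \<in> fspan (range dirac)"
  shows "\<exists>(m::nat) a x. \<psi> = (\<lambda>g. \<Sum>j<m. a j * dirac (x j) g)"
proof -
  obtain m :: nat and a w where w: "\<forall>j<m. w j \<in> range dirac" "\<psi> = (\<lambda>g. \<Sum>j<m. a j * w j g)"
    using fspan_elem[OF assms] by blast
  have "\<forall>j\<in>{..<m}. \<exists>y. w j = dirac y" using w(1) by auto
  from bchoice[OF this] obtain x where x: "\<forall>j\<in>{..<m}. w j = dirac (x j)" by blast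
  have "\<psi> = (\<lambda>g. \<Sum>j<m. a j * dirac (x j) g)" unfolding w(2) using x by (intro ext sum.cong) auto
  then show ?thesis by blast
qed

lemma image_fspan:
  assumes lin: "\<And>(I::nat set) c w. finite I \<Longrightarrow> T (\<lambda>g. \<Sum>i\<in>I. c i * w i g) = (\<lambda>h. \<Sum>i\<in>I. c i * T (w i) h)"
  shows "T ` fspan B = fspan (T ` B)"
proof
  show "T ` fspan B \<subseteq> fspan (T ` B)"
  proof
    fix y assume "y \<in> T ` fspan B"
    then obtain e where e: "e \<in> fspan B" "y = T e" by blast
    obtain n :: nat and a w where w: "\<forall>i<n. w i \<in> B" "e = (\<lambda>g. \<Sum>i<n. a i * w i g)"
      using fspan_elem[OF e(1)] by blast
    have l: "T (\<lambda>g. \<Sum>i\<in>{..<n}. a i * w i g) = (\<lambda>h. \<Sum>i\<in>{..<n}. a i * T (w i) h)"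
      using lin[of "{..<n}" a w] by simp
    have "y = (\<lambda>h. \<Sum>i\<in>{..<n}. a i * T (w i) h)" unfolding e(2) w(2) l[symmetric] ..
    moreover have "(\<lambda>h. \<Sum>i\<in>{..<n}. a i * T (w i) h) \<in> fspan (T ` B)"
      by (rule fspan_finite) (use w in blast)+
    ultimately show "y \<in> fspan (T ` B)" by (simp only:)
  qed
  show "fspan (T ` B) \<subseteq> T ` fspan B"
  proof
    fix y assume "y \<in> fspan (T ` B)"
    then obtain n :: nat and a w where w: "\<forall>i<n. w i \<in> T ` B" "y = (\<lambda>g. \<Sum>i<n. a i * w i g)"
      using fspan_elem[of y] by blast
    have "\<forall>i\<in>{..<n}. \<exists>u. u \<in> B \<and> w i = T u" using w(1) by auto
    from bchoice[OF this] obtain u where u: "\<forall>i\<in>{..<n}. u i \<in> B \<and> w i = T (u i)" by blast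
    have m: "(\<lambda>g. \<Sum>i\<in>{..<n}. a i * u i g) \<in> fspan B" by (rule fspan_finite) (use u in blast)+
    have eq: "T (\<lambda>g. \<Sum>i\<in>{..<n}. a i * u i g) = y"
    proof -
      have "T (\<lambda>g. \<Sum>i\<in>{..<n}. a i * u i g) = (\<lambda>h. \<Sum>i\<in>{..<n}. a i * T (u i) h)"
        using lin[of "{..<n}" a u] by simp
      also have "\<dots> = (\<lambda>g. \<Sum>i\<in>{..<n}. a i * w i g)"
      proof (intro ext sum.cong refl)
        fix h i assume "i \<in> {..<n}"
        then have "w i = T (u i)" using u by blast
        then show "a i * T (u i) h = a i * w i h" by simp
      qed
      finally show ?thesis unfolding w(2) .
    qed
    show "y \<in> T ` fspan B" using image_eqI[of y T, OF eq[symmetric] m] .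
  qed
qed

lemma core:
  fixes f :: "'a::real_normed_vector \<Rightarrow> 'b::real_normed_vector"
    and B :: "(('a \<Rightarrow> real) \<Rightarrow> real) set"
  assumes Ac: "Ac > 0" and Bc: "Bc > 0" and C: "C \<ge> 0"
    and co: "\<forall>x y. Ac * norm (x - y) - C \<le> norm (f x - f y) \<and> norm (f x - f y) \<le> Bc * norm (x - y) + C"
    and finB: "finite B" and Bfree: "B \<subseteq> free_space TYPE('a)"
    and s: "s > 0" "s < Ac" "s < 1"
  shows "\<exists>F. fd_subspace_of F (free_space TYPE('b)) \<and>
           bm_dist (fspan B) F \<le> ereal ((Bc + s) * (1 + s) * (1 / ((Ac - s) * (1 - s))))"
proof -
  define E where "E = fspan B"
  have Bdual: "B \<subseteq> dual_Lip0" using Bfree unfolding free_space_def by auto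
  have Edual: "e \<in> dual_Lip0" if "e \<in> E" for e using fspan_dual[OF Bdual] that E_def by blast
  obtain n :: nat and bb L where LA: "\<forall>i<n. bb i \<in> B \<and> goodfun (L i)"
    "\<forall>e\<in>fspan B. \<forall>g\<in>Lip0. e g = (\<Sum>i<n. L i e * bb i g)"
    using LA[OF finB] by blast
  have "\<forall>i\<in>{..<n}. \<exists>K. K \<ge> 0 \<and> (\<forall>e\<in>(dual_Lip0::(('a \<Rightarrow> real) \<Rightarrow> real) set). \<bar>L i e\<bar> \<le> K * dnorm e)"
    using LA(1) unfolding goodfun_def by blast
  from bchoice[OF this] obtain K where K: "\<forall>i\<in>{..<n}. K i \<ge> 0 \<and> (\<forall>e\<in>(dual_Lip0::(('a \<Rightarrow> real) \<Rightarrow> real) set). \<bar>L i e\<bar> \<le> K i * dnorm e)"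
    by blast
  have linL: "linfun (L i)" if "i < n" for i using LA(1) that unfolding goodfun_def by blast
  define Ks where "Ks = (\<Sum>i<n. K i)"
  have Ks: "Ks \<ge> 0" unfolding Ks_def using K by (intro sum_nonneg) auto
  define \<eta> where "\<eta> = s / (Ks + 1)"
  have eta: "\<eta> > 0" "Ks * \<eta> \<le> s" using s Ks unfolding \<eta>_def by (auto simp: field_simps)
  have "\<forall>i\<in>{..<n}. \<exists>m::nat. \<exists>a x. dnorm (\<lambda>g. bb i g - (\<Sum>j<m. a j * dirac (x j) g)) < \<eta>"
  proof
    fix i assume "i \<in> {..<n}"
    then have "bb i \<in> free_space TYPE('a)" using LA(1) Bfree by auto
    then obtain \<psi> where psi: "\<psi> \<in> fspan (range dirac)" "dnorm (\<lambda>g. bb i g - \<psi> g) < \<eta>"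
      unfolding free_space_def using eta(1) by blast
    obtain m' :: nat and a' x' where "\<psi> = (\<lambda>g. \<Sum>j<m'. a' j * dirac (x' j) g)"
      using diracspan_rep[OF psi(1)] by blast
    then show "\<exists>m::nat. \<exists>a x. dnorm (\<lambda>g. bb i g - (\<Sum>j<m. a j * dirac (x j) g)) < \<eta>"
      using psi(2) by (intro exI[of _ m'] exI[of _ a'] exI[of _ x']) simp
  qed
  from bchoice[OF this] obtain m :: "nat \<Rightarrow> nat" where "\<forall>i\<in>{..<n}. \<exists>a x. dnorm (\<lambda>g. bb i g - (\<Sum>j<m i. a j * dirac (x j) g)) < \<eta>"
    by blast
  from bchoice[OF this] obtain a :: "nat \<Rightarrow> nat \<Rightarrow> real" where "\<forall>i\<in>{..<n}. \<exists>x. dnorm (\<lambda>g. bb i g - (\<Sum>j<m i. a i j * dirac (x j) g)) < \<eta>"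
    by blast
  from bchoice[OF this] obtain x :: "nat \<Rightarrow> nat \<Rightarrow> 'a" where approx: "\<forall>i\<in>{..<n}. dnorm (\<lambda>g. bb i g - (\<Sum>j<m i. a i j * dirac (x i j) g)) < \<eta>"
    by blast
  define d where "d i = (\<lambda>g. \<Sum>j<m i. a i j * dirac (x i j) g)" for i
  define M where "M = insert 0 (\<Union>i<n. x i ` {..<m i})"
  have finM: "finite M" unfolding M_def by auto
  have xM: "x i j \<in> M" if "i < n" "j < m i" for i j unfolding M_def using that by auto
  obtain \<phi> :: "'a \<Rightarrow> 'b" where phi: "\<phi> 0 = 0"
    "\<forall>x\<in>M. \<forall>y\<in>M. (Ac - s) * norm (x - y) \<le> norm (\<phi> x - \<phi> y) \<and> norm (\<phi> x - \<phi> y) \<le> (Bc + s) * norm (x - y)"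
    using coarse_finite[OF Ac C co finM s(1)] by blast
  define D where "D i = (\<lambda>h. \<Sum>j<m i. a i j * dirac (\<phi> (x i j)) h)" for i
  define T where "T e = (\<lambda>h. \<Sum>i<n. L i e * D i h)" for e
  define R where "R e = (\<lambda>g. \<Sum>i<n. L i e * d i g)" for e
  have bbdual: "bb i \<in> dual_Lip0" if "i < n" for i using LA(1) Bdual that by auto
  have ddual: "d i \<in> dual_Lip0" for i
    unfolding d_def by (rule dual_sum(1)) (rule dirac_dual)
  have Dspan: "D i \<in> fspan (range dirac)" for i
    unfolding D_def by (rule fspan_finite) auto
  have Tspan: "T e \<in> fspan (range dirac)" for e
    unfolding T_def by (rule fspan_sum) (rule Dspan)
  have Tdual: "T e \<in> dual_Lip0" for e
    by (rule fspan_dual[OF _ Tspan]) (auto intro: dirac_dual)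
  have Rdual: "R e \<in> dual_Lip0" for e
    unfolding R_def by (rule dual_sum(1)) (rule ddual)
  have Tlin: "T (\<lambda>g. \<Sum>i\<in>I. c i * w i g) = (\<lambda>h. \<Sum>i\<in>I. c i * T (w i) h)" if "finite I" for I :: "nat set" and c w
  proof -
    have "T (\<lambda>g. \<Sum>i\<in>I. c i * w i g) = (\<lambda>h. \<Sum>k<n. (\<Sum>i\<in>I. c i * L k (w i)) * D k h)"
      unfolding T_def by (intro ext sum.cong refl) (simp add: linfun_sum[OF linL])
    also have "\<dots> = (\<lambda>h. \<Sum>i\<in>I. c i * T (w i) h)"
      unfolding T_def by (rule ext) (simp add: sum_distrib_left sum_distrib_right mult.assoc sum.swap[of _ I])
    finally show ?thesis .
  qed
  have Tlin2: "T (\<lambda>g. c1 * u g + c2 * v g) = (\<lambda>h. c1 * T u h + c2 * T v h)" for c1 c2 u v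
    unfolding T_def by (rule ext) (simp add: linfunD[OF linL] sum.distrib sum_distrib_left algebra_simps)
  have T0: "T (\<lambda>g. 0) = (\<lambda>h. 0)" unfolding T_def by (simp add: linfun_zero[OF linL])
  have vdual: "(\<lambda>g. bb i g - d i g) \<in> dual_Lip0" if "i < n" for i
    using dual_comb[OF bbdual[OF that] ddual, of 1 "-1"] by simp
  have resid: "dnorm (\<lambda>g. e g - R e g) \<le> s * dnorm e" if eE: "e \<in> E" for e
  proof -
    have eq: "(\<lambda>g. e g - R e g) = (\<lambda>g. \<Sum>i\<in>{..<n}. L i e * (bb i g - d i g))"
    proof
      fix g
      show "e g - R e g = (\<Sum>i\<in>{..<n}. L i e * (bb i g - d i g))"
      proof (cases "g \<in> Lip0")
        case True
        then show ?thesis using LA(2) eE unfolding E_def R_def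
          by (simp add: right_diff_distrib sum_subtractf)
      next
        case False
        have "e g = 0" using dual_out[OF Edual[OF eE] False] .
        moreover have "R e g = 0" unfolding R_def using dual_out[OF ddual False] by simp
        moreover have "(\<Sum>i\<in>{..<n}. L i e * (bb i g - d i g)) = 0"
          using dual_out[OF bbdual False] dual_out[OF ddual False] by (intro sum.neutral) auto
        ultimately show ?thesis by simp
      qed
    qed
    have "dnorm (\<lambda>g. e g - R e g) \<le> (\<Sum>i\<in>{..<n}. \<bar>L i e\<bar> * dnorm (\<lambda>g. bb i g - d i g))"
      unfolding eq using dual_sum(2)[of "{..<n}" "\<lambda>i g. bb i g - d i g" "\<lambda>i. L i e"] vdual by simp
    also have "\<dots> \<le> (\<Sum>i\<in>{..<n}. (K i * dnorm e) * \<eta>)"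
    proof (rule sum_mono)
      fix i assume i: "i \<in> {..<n}"
      have "\<bar>L i e\<bar> \<le> K i * dnorm e" using K i Edual[OF eE] by blast
      moreover have "dnorm (\<lambda>g. bb i g - d i g) \<le> \<eta>" using approx i unfolding d_def by (simp add: less_imp_le)
      moreover have "0 \<le> dnorm (\<lambda>g. bb i g - d i g)" using dnorm_nonneg vdual i by blast
      ultimately show "\<bar>L i e\<bar> * dnorm (\<lambda>g. bb i g - d i g) \<le> (K i * dnorm e) * \<eta>"
        using K i dnorm_nonneg[OF Edual[OF eE]] by (intro mult_mono) auto
    qed
    also have "\<dots> = (\<Sum>i<n. K i) * (dnorm e * \<eta>)" by (simp add: sum_distrib_right mult.assoc)
    also have "\<dots> = (Ks * \<eta>) * dnorm e" unfolding Ks_def by (simp add: algebra_simps)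
    also have "\<dots> \<le> s * dnorm e" using eta dnorm_nonneg[OF Edual[OF eE]] by (intro mult_right_mono) auto
    finally show ?thesis .
  qed
  have Rb: "(1 - s) * dnorm e \<le> dnorm (R e) \<and> dnorm (R e) \<le> (1 + s) * dnorm e" if eE: "e \<in> E" for e
  proof -
    have dd: "(\<lambda>g. e g - R e g) \<in> dual_Lip0" using dual_comb[OF Edual[OF eE] Rdual, of 1 "-1"] by simp
    have "dnorm (R e) \<le> dnorm e + dnorm (\<lambda>g. e g - R e g)"
    proof (rule dnorm_le)
      fix g :: "'a \<Rightarrow> real" assume g: "g \<in> Lip0_ball"
      have "\<bar>R e g\<bar> \<le> \<bar>e g\<bar> + \<bar>e g - R e g\<bar>" by linarith
      also have "\<dots> \<le> dnorm e + dnorm (\<lambda>g. e g - R e g)"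
        using dual_abs_le[OF Edual[OF eE] g] dual_abs_le[OF dd g] by simp
      finally show "\<bar>R e g\<bar> \<le> dnorm e + dnorm (\<lambda>g. e g - R e g)" .
    qed
    moreover have "dnorm e \<le> dnorm (R e) + dnorm (\<lambda>g. e g - R e g)"
    proof (rule dnorm_le)
      fix g :: "'a \<Rightarrow> real" assume g: "g \<in> Lip0_ball"
      have "\<bar>e g\<bar> \<le> \<bar>R e g\<bar> + \<bar>e g - R e g\<bar>" by linarith
      also have "\<dots> \<le> dnorm (R e) + dnorm (\<lambda>g. e g - R e g)"
        using dual_abs_le[OF Rdual[of e] g] dual_abs_le[OF dd g] by simp
      finally show "\<bar>e g\<bar> \<le> dnorm (R e) + dnorm (\<lambda>g. e g - R e g)" .
    qed
    ultimately show ?thesis using resid[OF eE] by (simp add: algebra_simps)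
  qed
  have transfer: "T e h = R e G"
    if h: "h \<in> Lip0" and G: "G \<in> Lip0" and hG: "\<forall>mm\<in>M. G mm = h (\<phi> mm)" for e h G
  proof -
    have "T e h = (\<Sum>i<n. L i e * (\<Sum>j<m i. a i j * h (\<phi> (x i j))))"
      unfolding T_def D_def dirac_def using h by simp
    also have "\<dots> = (\<Sum>i<n. L i e * (\<Sum>j<m i. a i j * G (x i j)))"
    proof (intro sum.cong refl)
      fix i assume i: "i \<in> {..<n}"
      have "(\<Sum>j<m i. a i j * h (\<phi> (x i j))) = (\<Sum>j<m i. a i j * G (x i j))"
      proof (intro sum.cong refl)
        fix j assume "j \<in> {..<m i}"
        then have "x i j \<in> M" using xM i by auto
        then show "a i j * h (\<phi> (x i j)) = a i j * G (x i j)" using hG by simp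
      qed
      then show "L i e * (\<Sum>j<m i. a i j * h (\<phi> (x i j))) = L i e * (\<Sum>j<m i. a i j * G (x i j))" by simp
    qed
    also have "\<dots> = R e G" unfolding R_def d_def dirac_def using G by simp
    finally show ?thesis .
  qed
  have Mne: "M \<noteq> {}" and M0: "0 \<in> M" unfolding M_def by auto
  have upper: "dnorm (T e) \<le> (Bc + s) * dnorm (R e)" for e
  proof (rule dnorm_le)
    fix h :: "'b \<Rightarrow> real" assume hb: "h \<in> Lip0_ball"
    then have h1: "lipschitz_on 1 UNIV h" and h0: "h 0 = 0" by (auto simp: Lip0_ball_def)
    define G where "G y = Min ((\<lambda>mm. h (\<phi> mm) + (Bc + s) * dist y mm) ` M)" for y
    have lipc: "\<bar>h (\<phi> mm) - h (\<phi> mm')\<bar> \<le> (Bc + s) * dist mm mm'" if "mm \<in> M" "mm' \<in> M" for mm mm'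
    proof -
      have "\<bar>h (\<phi> mm) - h (\<phi> mm')\<bar> \<le> 1 * dist (\<phi> mm) (\<phi> mm')"
        using lipschitz_onD[OF h1] by (simp add: dist_real_def)
      also have "\<dots> \<le> (Bc + s) * dist mm mm'" using phi(2) that by (simp add: dist_norm)
      finally show ?thesis .
    qed
    have Bs: "Bc + s \<ge> 0" using Bc s by simp
    have Glip: "lipschitz_on (Bc + s) UNIV G"
      unfolding G_def using mcshane(1)[of M "Bc + s" "\<lambda>mm. h (\<phi> mm)" "\<lambda>mm. mm", OF finM Mne Bs lipc] by simp
    have Gval: "G mm = h (\<phi> mm)" if "mm \<in> M" for mm
      unfolding G_def using mcshane(2)[of M "Bc + s" "\<lambda>mm. h (\<phi> mm)" "\<lambda>mm. mm", OF finM Mne Bs lipc that] by simp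
    have G0: "G 0 = 0" using Gval[OF M0] phi(1) h0 by simp
    have GL: "G \<in> Lip0" using Glip G0 by (auto simp: Lip0_def)
    have hL: "h \<in> Lip0" using hb ball_in_Lip0 by blast
    have "T e h = R e G" using transfer[OF hL GL] Gval by blast
    then show "\<bar>T e h\<bar> \<le> (Bc + s) * dnorm (R e)" using dual_bound[OF Rdual Glip G0] by simp
  qed
  have lower: "(Ac - s) * dnorm (R e) \<le> dnorm (T e)" for e
  proof -
    have As: "Ac - s > 0" using s by simp
    have "dnorm (R e) \<le> (1 / (Ac - s)) * dnorm (T e)"
    proof (rule dnorm_le)
      fix g :: "'a \<Rightarrow> real" assume gb: "g \<in> Lip0_ball"
      then have g1: "lipschitz_on 1 UNIV g" and g0: "g 0 = 0" by (auto simp: Lip0_ball_def)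
      define H where "H y = Min ((\<lambda>mm. g mm + (1 / (Ac - s)) * dist y (\<phi> mm)) ` M)" for y
      have lipc: "\<bar>g mm - g mm'\<bar> \<le> (1 / (Ac - s)) * dist (\<phi> mm) (\<phi> mm')" if "mm \<in> M" "mm' \<in> M" for mm mm'
      proof -
        have "\<bar>g mm - g mm'\<bar> \<le> 1 * dist mm mm'"
          using lipschitz_onD[OF g1] by (simp add: dist_real_def)
        also have "\<dots> \<le> (1 / (Ac - s)) * dist (\<phi> mm) (\<phi> mm')"
          using phi(2) that As by (simp add: dist_norm field_simps)
        finally show ?thesis .
      qed
      have Ls: "1 / (Ac - s) \<ge> 0" using As by simp
      have Hlip: "lipschitz_on (1 / (Ac - s)) UNIV H"
        unfolding H_def using mcshane(1)[of M "1 / (Ac - s)" g \<phi>, OF finM Mne Ls lipc] by simp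
      have Hval: "H (\<phi> mm) = g mm" if "mm \<in> M" for mm
        unfolding H_def using mcshane(2)[of M "1 / (Ac - s)" g \<phi>, OF finM Mne Ls lipc that] by simp
      have H0: "H 0 = 0" using Hval[OF M0] phi(1) g0 by simp
      have HL: "H \<in> Lip0" using Hlip H0 by (auto simp: Lip0_def)
      have gL: "g \<in> Lip0" using gb ball_in_Lip0 by blast
      have "T e H = R e g" using transfer[OF HL gL] Hval by simp
      then show "\<bar>R e g\<bar> \<le> (1 / (Ac - s)) * dnorm (T e)" using dual_bound[OF Tdual[of e] Hlip H0] by simp
    qed
    then show ?thesis using As by (simp add: field_simps)
  qed
  define c0 where "c0 = (Ac - s) * (1 - s)"
  have c0: "c0 > 0" unfolding c0_def using s by simp
  have Tup: "dnorm (T e) \<le> (Bc + s) * (1 + s) * dnorm e" if "e \<in> E" for e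
  proof -
    have "dnorm (T e) \<le> (Bc + s) * dnorm (R e)" by (rule upper)
    also have "\<dots> \<le> (Bc + s) * ((1 + s) * dnorm e)" using Rb[OF that] Bc s by (intro mult_left_mono) auto
    finally show ?thesis by (simp add: algebra_simps)
  qed
  have Tlow: "c0 * dnorm e \<le> dnorm (T e)" if "e \<in> E" for e
  proof -
    have "c0 * dnorm e = (Ac - s) * ((1 - s) * dnorm e)" unfolding c0_def by simp
    also have "\<dots> \<le> (Ac - s) * dnorm (R e)" using Rb[OF that] s by (intro mult_left_mono) auto
    also have "\<dots> \<le> dnorm (T e)" by (rule lower)
    finally show ?thesis .
  qed
  have zE: "(\<lambda>g. 0) \<in> E" unfolding E_def by (rule fspan_zero)
  have inj: "e1 = e2" if "e1 \<in> E" "e2 \<in> E" "T e1 = T e2" for e1 e2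
  proof -
    define e where "e = (\<lambda>g. 1 * e1 g + (-1) * e2 g)"
    have eE: "e \<in> E" unfolding e_def E_def by (rule fspan_comb) (use that in \<open>auto simp: E_def\<close>)
    have "T e = (\<lambda>h. 1 * T e1 h + (-1) * T e2 h)" unfolding e_def by (rule Tlin2)
    then have "T e = (\<lambda>h. 0)" using that(3) by simp
    then have "c0 * dnorm e \<le> 0" using Tlow[OF eE] dnorm_zero[where 'a='b] by simp
    then have "dnorm e \<le> 0" using c0 by (simp add: mult_le_0_iff)
    then have "e = (\<lambda>g. 0)" using dnorm_zero_imp Edual[OF eE] by blast
    show ?thesis
    proof
      fix g
      have "1 * e1 g + (-1) * e2 g = 0" using fun_cong[OF \<open>e = (\<lambda>g. 0)\<close>, of g] unfolding e_def by simp
      then show "e1 g = e2 g" by simp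
    qed
  qed
  define F where "F = T ` E"
  have Ffd: "fd_subspace_of F (free_space TYPE('b))"
  proof -
    have "F \<subseteq> free_space TYPE('b)" unfolding F_def using Tspan diracspan_free by blast
    moreover have "F = fspan (T ` B)" unfolding F_def E_def by (rule image_fspan) (rule Tlin)
    ultimately show ?thesis unfolding fd_subspace_of_def using finB by blast
  qed
  define S where "S f = (SOME e. e \<in> E \<and> T e = f)" for f
  have Sprop: "S f \<in> E \<and> T (S f) = f" if "f \<in> F" for f
  proof -
    have "\<exists>e. e \<in> E \<and> T e = f" using that unfolding F_def by blast
    then show ?thesis unfolding S_def by (rule someI_ex)
  qed
  have ST: "S (T e) = e" if "e \<in> E" for e
  proof -
    have "T e \<in> F" unfolding F_def using that by (rule imageI)
    from Sprop[OF this] have a: "S (T e) \<in> E" and c: "T (S (T e)) = T e" by auto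
    from inj[OF a that c] show ?thesis .
  qed
  have linT: "linear_on_set E T"
    unfolding linear_on_set_def fadd_def fscale_def using Tlin2 by blast
  have linS: "linear_on_set F S"
    unfolding linear_on_set_def fadd_def fscale_def
  proof (intro ballI allI)
    fix u v c1 c2 assume u: "u \<in> F" and v: "v \<in> F"
    define w where "w = (\<lambda>g. c1 * S u g + c2 * S v g)"
    have wE: "w \<in> E" unfolding w_def using Sprop[OF u] Sprop[OF v] unfolding E_def by (intro fspan_comb) auto
    have "T w = (\<lambda>h. c1 * u h + c2 * v h)" unfolding w_def Tlin2 using Sprop[OF u] Sprop[OF v] by simp
    then have "S (\<lambda>h. c1 * u h + c2 * v h) = w" using ST[OF wE] by simp
    then show "S (\<lambda>g. c1 * u g + c2 * v g) = (\<lambda>g. c1 * S u g + c2 * S v g)" unfolding w_def by simp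
  qed
  have opT: "op_norm_on E T \<le> (Bc + s) * (1 + s)"
    unfolding op_norm_on_def
  proof (rule cSup_least)
    show "{dnorm (T e) |e. e \<in> E \<and> dnorm e \<le> 1} \<noteq> {}" using zE dnorm_zero[where 'a='a] by auto
  next
    fix r assume "r \<in> {dnorm (T e) |e. e \<in> E \<and> dnorm e \<le> 1}"
    then obtain e where e: "r = dnorm (T e)" "e \<in> E" "dnorm e \<le> 1" by blast
    have "dnorm (T e) \<le> (Bc + s) * (1 + s) * dnorm e" by (rule Tup[OF e(2)])
    also have "\<dots> \<le> (Bc + s) * (1 + s) * 1" using e(3) Bc s by (intro mult_left_mono) auto
    finally show "r \<le> (Bc + s) * (1 + s)" using e(1) by simp
  qed
  have Sset_bd: "r \<le> 1 / c0" if rin: "r \<in> {dnorm (S f) |f. f \<in> F \<and> dnorm f \<le> 1}" for r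
  proof -
    obtain f where f: "r = dnorm (S f)" "f \<in> F" "dnorm f \<le> 1" using rin by blast
    have "c0 * dnorm (S f) \<le> dnorm (T (S f))" using Tlow Sprop[OF f(2)] by blast
    also have "\<dots> \<le> 1" using Sprop[OF f(2)] f(3) by simp
    finally show ?thesis using f(1) c0 by (simp add: field_simps)
  qed
  have zF: "(\<lambda>h. 0) \<in> F" unfolding F_def using image_eqI[of "\<lambda>h. 0" T, OF T0[symmetric] zE] .
  have S0: "S (\<lambda>h. 0) = (\<lambda>g. 0)" using ST[OF zE] T0 by simp
  have opS: "op_norm_on F S \<le> 1 / c0"
    unfolding op_norm_on_def
    by (rule cSup_least) (use zF dnorm_zero[where 'a='b] Sset_bd in auto)
  have opS0: "0 \<le> op_norm_on F S"
    unfolding op_norm_on_def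
  proof (rule cSup_upper2)
    show "0 \<in> {dnorm (S f) |f. f \<in> F \<and> dnorm f \<le> 1}"
      using zF S0 dnorm_zero[where 'a='a] dnorm_zero[where 'a='b] by force
    show "bdd_above {dnorm (S f) |f. f \<in> F \<and> dnorm f \<le> 1}"
      using Sset_bd by (intro bdd_aboveI) blast
  qed simp
  have prod: "op_norm_on E T * op_norm_on F S \<le> (Bc + s) * (1 + s) * (1 / c0)"
    using opT opS opS0 Bc s by (intro mult_mono) auto
  have "bm_dist E F \<le> ereal (op_norm_on E T * op_norm_on F S)"
    unfolding bm_dist_def
  proof (rule Inf_lower)
    show "ereal (op_norm_on E T * op_norm_on F S) \<in> {ereal (op_norm_on E T * op_norm_on F S) |T S.
      linear_on_set E T \<and> linear_on_set F S \<and> T ` E \<subseteq> F \<and> S ` F \<subseteq> E \<and>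
      (\<forall>e\<in>E. S (T e) = e) \<and> (\<forall>f\<in>F. T (S f) = f)}"
    proof (intro CollectI exI[of _ T] exI[of _ S] conjI refl)
      show "T ` E \<subseteq> F" unfolding F_def by (rule subset_refl)
      show "S ` F \<subseteq> E" using Sprop by blast
      show "\<forall>e\<in>E. S (T e) = e" using ST by blast
      show "\<forall>f\<in>F. T (S f) = f" using Sprop by blast
    qed (rule linT, rule linS)
  qed
  also have "\<dots> \<le> ereal ((Bc + s) * (1 + s) * (1 / ((Ac - s) * (1 - s))))"
    using prod unfolding c0_def by simp
  finally show ?thesis using Ffd unfolding E_def by blast
qed

theorem corollary4p10:
  assumes "coarse_lipschitz_embeds TYPE('a::banach) TYPE('b::banach)"
  shows "crudely_fin_rep (free_space TYPE('a)) (free_space TYPE('b))"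
proof -
  obtain f :: "'a \<Rightarrow> 'b" and Ac Bc C where co: "Ac > 0" "Bc > 0" "C \<ge> 0"
    "\<forall>x y. Ac * norm (x - y) - C \<le> norm (f x - f y) \<and> norm (f x - f y) \<le> Bc * norm (x - y) + C"
    using assms unfolding coarse_lipschitz_embeds_def by blast
  define lam where "lam = max 1 (Bc / Ac)"
  have main: "\<forall>E. fd_subspace_of E (free_space TYPE('a)) \<longrightarrow>
      (\<forall>\<epsilon>>0. \<exists>F. fd_subspace_of F (free_space TYPE('b)) \<and> bm_dist E F \<le> ereal (lam + \<epsilon>))"
  proof (intro allI impI)
    fix E :: "(('a \<Rightarrow> real) \<Rightarrow> real) set" and \<epsilon> :: real
    assume E: "fd_subspace_of E (free_space TYPE('a))" and eps: "\<epsilon> > 0"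
    obtain B where B: "finite B" "E = fspan B" and Esub: "E \<subseteq> free_space TYPE('a)"
      using E unfolding fd_subspace_of_def by blast
    have Bfree: "B \<subseteq> free_space TYPE('a)" using fspan_base Esub B(2) by blast
    define q where "q s = (Bc + s) * (1 + s) * (1 / ((Ac - s) * (1 - s)))" for s :: real
    have lim: "(q \<longlongrightarrow> (Bc + 0) * (1 + 0) * (1 / ((Ac - 0) * (1 - 0)))) (at_right 0)"
      unfolding q_def by (intro tendsto_intros) (use co in auto)
    have "(Bc + 0) * (1 + 0) * (1 / ((Ac - 0) * (1 - 0))) < lam + \<epsilon>"
      unfolding lam_def using eps by simp
    then have ev1: "eventually (\<lambda>s. q s < lam + \<epsilon>) (at_right 0)"
      using order_tendstoD(2)[OF lim] by blast
    have ev2: "eventually (\<lambda>s. 0 < s \<and> s < Ac \<and> s < 1) (at_right (0::real))"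
      unfolding eventually_at_right_field using co(1) by (intro exI[of _ "min Ac 1"]) auto
    obtain s where s: "q s < lam + \<epsilon>" "0 < s" "s < Ac" "s < 1"
      using eventually_happens'[OF _ eventually_conj[OF ev1 ev2]] by auto
    obtain F where F: "fd_subspace_of F (free_space TYPE('b))"
      "bm_dist (fspan B) F \<le> ereal ((Bc + s) * (1 + s) * (1 / ((Ac - s) * (1 - s))))"
      using core[OF co(1) co(2) co(3) co(4) B(1) Bfree s(2) s(3) s(4)] by blast
    have "bm_dist E F \<le> ereal (lam + \<epsilon>)"
      using F(2) s(1) B(2) unfolding q_def by (meson ereal_less_eq(3) less_imp_le order_trans)
    then show "\<exists>F. fd_subspace_of F (free_space TYPE('b)) \<and> bm_dist E F \<le> ereal (lam + \<epsilon>)"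
      using F(1) by blast
  qed
  have "lam \<ge> 1" unfolding lam_def by simp
  then show ?thesis unfolding crudely_fin_rep_def using main by blast
qed

end
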